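(* If a database with integrity constraints $\langle\mathcal{I},\eta\rangle$ (in the setting described below) is consistent, then it has a possible world $U$ such that $|\mathit{Dom}(U)|=O(\mathit{size}(\mathcal{I})+\mathit{size}(\eta))$, where the constant in the $O$-notation depends only on the fixed database schema.
   Context: Constants: $\mathit{Dom}=\{\bot,1,2,\dots\}$ with $\bot$ the null value, $\mathit{Dom}_d=\{1,2,\dots\}$; the only built-in relations are $=$ and $\le$. The set of base predicate symbols (hence the maximum arity) is fixed. For a set $S$ of atoms, $\mathit{Dom}(S)$ is the set of constants occurring in $S$; $\mathit{size}(\cdot)$ is the size of the representation. Facts are ground atoms; definite facts contain no $\bot$. For tuples, $t\preceq t'$ if each $t_i=t'_i$ or $t_i=\bot$; $a\approx b$ if some $s$ has $a\preceq s,b\preceq s$. For a set $S$ of facts: $S^\Downarrow=\{a:\exists b\in S,a\preceq b\}$, $S^\Uparrow=\{a:\exists b\in S,b\preceq a\}$, $S^\approx=\{a:\exists b\in S,b\approx a\}$, $S^\sim=S^\approx\setminus S^\Downarrow$. A database is $\mathcal{I}=\langle D,E\rangle$, $D,E$ finite sets of base facts; $\mathcal{I}_t=D^\Downarrow$, $\mathcal{I}_u=D^\sim\setminus E^\Uparrow$; a possible world of $\mathcal{I}$ is a set $W$ of definite facts with $\mathcal{I}_t\subseteq W^\Downarrow$ and $W\subseteq\mathcal{I}_t\cup\mathcal{I}_u$. Integrity constraints have the form $\exists X\,\forall Y\,(A_1\wedge\dots\wedge A_k\rightarrow B_1\vee\dots\vee B_m)$, atoms without $\bot$ over base and built-in predicates,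 every variable in $X\cup Y$ and occurring in some base-predicate $A_i$. A possible world of $\langle\mathcal{I},\eta\rangle$ is a possible world of $\mathcal{I}$ satisfying every constraint of $\eta$ (as an interpretation with domain $\mathit{Dom}_d$); $\langle\mathcal{I},\eta\rangle$ is consistent if one exists. *)

theory Defs
  imports Main
begin

text \<open>Constants: natural numbers, with 0 playing the role of the null value bot,
  and the positive naturals forming Dom_d. Base predicate symbols: a finite type 'p
  with an arity function (the fixed schema).\<close>

type_synonym 'p fact = "'p \<times> nat list"

definition bot_val :: nat where "bot_val = 0"

definition wf_fact :: "('p \<Rightarrow> nat) \<Rightarrow> 'p fact \<Rightarrow> bool" where
  "wf_fact ar a \<longleftrightarrow> length (snd a) = ar (fst a)"

definition definite :: "'p fact \<Rightarrow> bool" where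
  "definite a \<longleftrightarrow> bot_val \<notin> set (snd a)"

definition Dom :: "'p fact set \<Rightarrow> nat set" where
  "Dom S = (\<Union>a\<in>S. set (snd a))"

definition prec :: "'p fact \<Rightarrow> 'p fact \<Rightarrow> bool" where
  "prec a b \<longleftrightarrow> fst a = fst b \<and> length (snd a) = length (snd b) \<and>
     (\<forall>i<length (snd a). snd a ! i = snd b ! i \<or> snd a ! i = bot_val)"

definition compat :: "'p fact \<Rightarrow> 'p fact \<Rightarrow> bool" where
  "compat a b \<longleftrightarrow> (\<exists>s. prec a s \<and> prec b s)"

definition down :: "'p fact set \<Rightarrow> 'p fact set" where
  "down S = {a. \<exists>b\<in>S. prec a b}"

definition up :: "'p fact set \<Rightarrow> 'p fact set" where
  "up S = {a. \<exists>b\<in>S. prec b a}"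

definition compatS :: "'p fact set \<Rightarrow> 'p fact set" where
  "compatS S = {a. \<exists>b\<in>S. compat b a}"

definition simS :: "'p fact set \<Rightarrow> 'p fact set" where
  "simS S = compatS S - down S"

definition It :: "'p fact set \<Rightarrow> 'p fact set" where
  "It D = down D"

definition Iu :: "'p fact set \<Rightarrow> 'p fact set \<Rightarrow> 'p fact set" where
  "Iu D E = simS D - up E"

text \<open>Database I = (D, E): finite sets of well-formed base facts.\<close>
definition wf_db :: "('p \<Rightarrow> nat) \<Rightarrow> 'p fact set \<Rightarrow> 'p fact set \<Rightarrow> bool" where
  "wf_db ar D E \<longleftrightarrow> finite D \<and> finite E \<and> (\<forall>a\<in>D \<union> E. wf_fact ar a)"

definition possible_world :: "'p fact set \<Rightarrow> 'p fact set \<Rightarrow> 'p fact set \<Rightarrow> bool" where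
  "possible_world D E W \<longleftrightarrow> (\<forall>a\<in>W. definite a) \<and> It D \<subseteq> down W \<and> W \<subseteq> It D \<union> Iu D E"

datatype trm = Var nat | Cst nat

datatype 'p atom = Base 'p "trm list" | Eq trm trm | Leq trm trm

record 'p constr =
  exvars :: "nat list"
  allvars :: "nat list"
  body :: "'p atom list"
  head :: "'p atom list"

fun trm_vars :: "trm \<Rightarrow> nat set" where
  "trm_vars (Var v) = {v}" | "trm_vars (Cst c) = {}"

fun trm_consts :: "trm \<Rightarrow> nat set" where
  "trm_consts (Var v) = {}" | "trm_consts (Cst c) = {c}"

fun atom_trms :: "'p atom \<Rightarrow> trm list" where
  "atom_trms (Base p ts) = ts"
| "atom_trms (Eq s t) = [s, t]"
| "atom_trms (Leq s t) = [s, t]"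

definition atom_vars :: "'p atom \<Rightarrow> nat set" where
  "atom_vars A = (\<Union>t\<in>set (atom_trms A). trm_vars t)"

fun is_base :: "'p atom \<Rightarrow> bool" where
  "is_base (Base p ts) = True" | "is_base _ = False"

fun wf_atom :: "('p \<Rightarrow> nat) \<Rightarrow> 'p atom \<Rightarrow> bool" where
  "wf_atom ar (Base p ts) = (length ts = ar p \<and> (\<forall>t\<in>set ts. bot_val \<notin> trm_consts t))"
| "wf_atom ar (Eq s t) = (bot_val \<notin> trm_consts s \<union> trm_consts t)"
| "wf_atom ar (Leq s t) = (bot_val \<notin> trm_consts s \<union> trm_consts t)"

definition wf_constr :: "('p \<Rightarrow> nat) \<Rightarrow> 'p constr \<Rightarrow> bool" where
  "wf_constr ar c \<longleftrightarrow>
     set (exvars c) \<inter> set (allvars c) = {} \<and>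
     (\<forall>A\<in>set (body c) \<union> set (head c). wf_atom ar A) \<and>
     (\<forall>A\<in>set (body c) \<union> set (head c). \<forall>v\<in>atom_vars A.
        v \<in> set (exvars c) \<union> set (allvars c)) \<and>
     (\<forall>v\<in>set (exvars c) \<union> set (allvars c).
        \<exists>A\<in>set (body c). is_base A \<and> v \<in> atom_vars A)"

fun eval_trm :: "(nat \<Rightarrow> nat) \<Rightarrow> trm \<Rightarrow> nat" where
  "eval_trm \<sigma> (Var v) = \<sigma> v" | "eval_trm \<sigma> (Cst c) = c"

fun holds :: "'p fact set \<Rightarrow> (nat \<Rightarrow> nat) \<Rightarrow> 'p atom \<Rightarrow> bool" where
  "holds W \<sigma> (Base p ts) = ((p, map (eval_trm \<sigma>) ts) \<in> W)"
| "holds W \<sigma> (Eq s t) = (eval_trm \<sigma> s = eval_trm \<sigma> t)"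
| "holds W \<sigma> (Leq s t) = (eval_trm \<sigma> s \<le> eval_trm \<sigma> t)"

text \<open>Satisfaction of a constraint by W, as an interpretation with domain
  Dom_d = positive naturals: there exist values in Dom_d for the existential
  variables such that for all values in Dom_d of the universal variables the
  implication holds.\<close>
definition satisfies :: "'p fact set \<Rightarrow> 'p constr \<Rightarrow> bool" where
  "satisfies W c \<longleftrightarrow>
     (\<exists>f. (\<forall>x\<in>set (exvars c). f x \<noteq> bot_val) \<and>
        (\<forall>g. (\<forall>y\<in>set (allvars c). g y \<noteq> bot_val) \<longrightarrow>
           (let \<sigma> = (\<lambda>v. if v \<in> set (exvars c) then f v else g v) in
             (\<forall>A\<in>set (body c). holds W \<sigma> A) \<longrightarrow> (\<exists>B\<in>set (head c). holds W \<sigma> B))))"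

definition possible_world_ic ::
  "'p fact set \<Rightarrow> 'p fact set \<Rightarrow> 'p constr set \<Rightarrow> 'p fact set \<Rightarrow> bool" where
  "possible_world_ic D E \<eta> W \<longleftrightarrow> possible_world D E W \<and> (\<forall>c\<in>\<eta>. satisfies W c)"

definition consistent :: "'p fact set \<Rightarrow> 'p fact set \<Rightarrow> 'p constr set \<Rightarrow> bool" where
  "consistent D E \<eta> \<longleftrightarrow> (\<exists>W. possible_world_ic D E \<eta> W)"

definition fact_size :: "'p fact \<Rightarrow> nat" where
  "fact_size a = 1 + length (snd a)"

definition db_size :: "'p fact set \<Rightarrow> 'p fact set \<Rightarrow> nat" where
  "db_size D E = (\<Sum>a\<in>D. fact_size a) + (\<Sum>a\<in>E. fact_size a)"

definition atom_size :: "'p atom \<Rightarrow> nat" where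
  "atom_size A = 1 + length (atom_trms A)"

definition constr_size :: "'p constr \<Rightarrow> nat" where
  "constr_size c = 1 + length (exvars c) + length (allvars c)
     + (\<Sum>A\<leftarrow>body c. atom_size A) + (\<Sum>A\<leftarrow>head c. atom_size A)"

definition ics_size :: "'p constr set \<Rightarrow> nat" where
  "ics_size \<eta> = (\<Sum>c\<in>\<eta>. constr_size c)"

end

theory Submission
  imports Defs
begin

lemma holds_mono: "U \<subseteq> W \<Longrightarrow> holds U \<sigma> A \<Longrightarrow> holds W \<sigma> A"
  by (cases A) auto

lemma head_transfer:
  assumes wf: "wf_constr ar c" and sub: "U \<subseteq> W"
    and clos: "\<forall>a\<in>W. set (snd a) \<subseteq> C \<longrightarrow> a \<in> U"
    and hc: "\<forall>A\<in>set (head c). \<forall>t\<in>set (atom_trms A). trm_consts t \<subseteq> C"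
    and dU: "\<forall>a\<in>U. set (snd a) \<subseteq> C"
    and bU: "\<forall>A\<in>set (body c). holds U \<sigma> A"
    and B: "B \<in> set (head c)" and hW: "holds W \<sigma> B"
  shows "holds U \<sigma> B"
proof (cases B)
  case (Base p ts)
  have "set (map (eval_trm \<sigma>) ts) \<subseteq> C"
  proof
    fix x assume "x \<in> set (map (eval_trm \<sigma>) ts)"
    then obtain t where t: "t \<in> set ts" "x = eval_trm \<sigma> t" by auto
    show "x \<in> C"
    proof (cases t)
      case (Cst k)
      have "trm_consts t \<subseteq> C" using hc B Base t(1) by (metis atom_trms.simps(1))
      then show ?thesis using Cst t by simp
    next
      case (Var v)
      have "v \<in> atom_vars B" using Base t Var by (auto simp: atom_vars_def intro!: bexI[of _ "Var v"])
      then have "v \<in> set (exvars c) \<union> set (allvars c)" using wf B unfolding wf_constr_def by blast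
      then obtain A where A: "A \<in> set (body c)" "is_base A" "v \<in> atom_vars A"
        using wf unfolding wf_constr_def by blast
      from A(2) obtain q ss where Aq: "A = Base q ss" by (cases A) auto
      have "Var v \<in> set ss" using A(3) Aq
      proof -
        obtain x where x: "x \<in> set ss" "v \<in> trm_vars x" using A(3) Aq by (auto simp: atom_vars_def)
        have "x = Var v" using x(2) by (cases x) auto
        with x(1) show ?thesis by simp
      qed
      moreover have "(q, map (eval_trm \<sigma>) ss) \<in> U" using bU A(1) Aq by auto
      ultimately have "\<sigma> v \<in> C" using dU by fastforce
      then show ?thesis using t Var by simp
    qed
  qed
  then show ?thesis using hW Base clos by auto
next
  case (Eq s t) then show ?thesis using hW by simp
next
  case (Leq s t) then show ?thesis using hW by simp
qed

lemma sat_transfer: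
  assumes sat: "satisfies W c" and wf: "wf_constr ar c" and sub: "U \<subseteq> W"
    and clos: "\<forall>a\<in>W. set (snd a) \<subseteq> C \<longrightarrow> a \<in> U"
    and hc: "\<forall>A\<in>set (head c). \<forall>t\<in>set (atom_trms A). trm_consts t \<subseteq> C"
    and dU: "\<forall>a\<in>U. set (snd a) \<subseteq> C"
  shows "satisfies U c"
proof -
  from sat obtain f where f1: "\<forall>x\<in>set (exvars c). f x \<noteq> bot_val"
    and f2: "\<And>g. (\<forall>y\<in>set (allvars c). g y \<noteq> bot_val) \<Longrightarrow>
       (\<forall>A\<in>set (body c). holds W (\<lambda>v. if v \<in> set (exvars c) then f v else g v) A) \<Longrightarrow>
       (\<exists>B\<in>set (head c). holds W (\<lambda>v. if v \<in> set (exvars c) then f v else g v) B)"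
    unfolding satisfies_def Let_def by blast
  show ?thesis unfolding satisfies_def Let_def
  proof (intro exI conjI allI impI)
    show "\<forall>x\<in>set (exvars c). f x \<noteq> bot_val" by (rule f1)
    fix g assume g: "\<forall>y\<in>set (allvars c). g y \<noteq> bot_val"
      and bU: "\<forall>A\<in>set (body c). holds U (\<lambda>v. if v \<in> set (exvars c) then f v else g v) A"
    then have "\<forall>A\<in>set (body c). holds W (\<lambda>v. if v \<in> set (exvars c) then f v else g v) A"
      using holds_mono[OF sub] by blast
    with f2[OF g] obtain B where "B \<in> set (head c)"
      "holds W (\<lambda>v. if v \<in> set (exvars c) then f v else g v) B" by blast
    with head_transfer[OF wf sub clos hc dU bU] show
      "\<exists>B\<in>set (head c). holds U (\<lambda>v. if v \<in> set (exvars c) then f v else g v) B" by blast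
  qed
qed

lemma card_UN_list:
  assumes "\<And>x. finite (F x)"
  shows "card (\<Union>x\<in>set xs. F x) \<le> (\<Sum>x\<leftarrow>xs. card (F x))"
proof (induction xs)
  case Nil then show ?case by simp
next
  case (Cons a xs)
  have "card (\<Union>x\<in>set (a # xs). F x) \<le> card (F a) + card (\<Union>x\<in>set xs. F x)"
    by (simp add: card_Un_le)
  then show ?case using Cons by simp
qed

lemma sum_list_mono_nat:
  "(\<And>x. x \<in> set xs \<Longrightarrow> f x \<le> (g x::nat)) \<Longrightarrow> (\<Sum>x\<leftarrow>xs. f x) \<le> (\<Sum>x\<leftarrow>xs. g x)"
  by (induction xs) (auto intro: add_mono)

definition HCc :: "'p constr \<Rightarrow> nat set" where
  "HCc c = (\<Union>A\<in>set (head c). \<Union>t\<in>set (atom_trms A). trm_consts t)"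

lemma finite_trm_consts: "finite (trm_consts t)" by (cases t) auto
lemma card_trm_consts: "card (trm_consts t) \<le> 1" by (cases t) auto

lemma HCc_finite: "finite (HCc c)"
  unfolding HCc_def by (auto simp: finite_trm_consts)

lemma HCc_card: "card (HCc c) \<le> constr_size c"
proof -
  have "card (HCc c) \<le> (\<Sum>A\<leftarrow>head c. card (\<Union>t\<in>set (atom_trms A). trm_consts t))"
    unfolding HCc_def by (rule card_UN_list) (auto simp: finite_trm_consts)
  also have "\<dots> \<le> (\<Sum>A\<leftarrow>head c. atom_size A)"
  proof (rule sum_list_mono_nat)
    fix A
    have "card (\<Union>t\<in>set (atom_trms A). trm_consts t) \<le> (\<Sum>t\<leftarrow>atom_trms A. card (trm_consts t))"
      by (rule card_UN_list) (auto simp: finite_trm_consts)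
    also have "\<dots> \<le> (\<Sum>t\<leftarrow>atom_trms A. 1)"
      by (rule sum_list_mono_nat) (rule card_trm_consts)
    also have "\<dots> \<le> atom_size A" by (simp add: atom_size_def sum_list_triv)
    finally show "card (\<Union>t\<in>set (atom_trms A). trm_consts t) \<le> atom_size A" .
  qed
  also have "\<dots> \<le> constr_size c" by (simp add: constr_size_def)
  finally show ?thesis .
qed

theorem lemma1:
  fixes ar :: "'p::finite \<Rightarrow> nat"
  shows "\<exists>K::nat. \<forall>(D::'p fact set) E (\<eta>::'p constr set).
           wf_db ar D E \<and> finite \<eta> \<and> (\<forall>c\<in>\<eta>. wf_constr ar c) \<and> consistent D E \<eta> \<longrightarrow>
           (\<exists>U. possible_world_ic D E \<eta> U \<and> finite U \<and>
                card (Dom U) \<le> K * (db_size D E + ics_size \<eta>) + K)"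
proof (intro exI[of _ 1] allI impI, elim conjE)
  fix D E :: "'p fact set" and \<eta> :: "'p constr set"
  assume wfdb: "wf_db ar D E" and fin\<eta>: "finite \<eta>" and wfc: "\<forall>c\<in>\<eta>. wf_constr ar c"
    and cons: "consistent D E \<eta>"
  from wfdb have finD: "finite D" and finE: "finite E" by (auto simp: wf_db_def)
  from cons obtain W where pw: "possible_world D E W" and satW: "\<forall>c\<in>\<eta>. satisfies W c"
    unfolding consistent_def possible_world_ic_def by blast
  have "\<forall>b\<in>D. \<exists>w\<in>W. prec b w"
  proof
    fix b assume "b \<in> D"
    then have "b \<in> It D" by (auto simp: It_def down_def prec_def)
    then have "b \<in> down W" using pw by (auto simp: possible_world_def)
    then show "\<exists>w\<in>W. prec b w" by (auto simp: down_def)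
  qed
  then obtain w where w: "\<And>b. b \<in> D \<Longrightarrow> w b \<in> W \<and> prec b (w b)" by metis
  define C where "C = (\<Union>b\<in>D. set (snd (w b))) \<union> (\<Union>c\<in>\<eta>. HCc c)"
  define U where "U = {a\<in>W. set (snd a) \<subseteq> C}"
  have finC: "finite C" unfolding C_def using finD fin\<eta> HCc_finite by auto
  have UW: "U \<subseteq> W" unfolding U_def by auto
  have dU: "\<forall>a\<in>U. set (snd a) \<subseteq> C" unfolding U_def by auto
  have clos: "\<forall>a\<in>W. set (snd a) \<subseteq> C \<longrightarrow> a \<in> U" unfolding U_def by auto
  have wU: "w b \<in> U" if "b \<in> D" for b
    using w[OF that] that unfolding U_def C_def by auto
  have prec_trans: "prec a c" if "prec a b" "prec b c" for a b c :: "'p fact"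
    using that unfolding prec_def by (metis bot_val_def)
  have pwU: "possible_world D E U"
    unfolding possible_world_def
  proof (intro conjI)
    show "\<forall>a\<in>U. definite a" using pw UW by (auto simp: possible_world_def)
    show "U \<subseteq> It D \<union> Iu D E" using pw UW by (auto simp: possible_world_def)
    show "It D \<subseteq> down U"
    proof
      fix a assume "a \<in> It D"
      then obtain b where b: "b \<in> D" "prec a b" by (auto simp: It_def down_def)
      then have "prec a (w b)" using w prec_trans by blast
      then show "a \<in> down U" using wU[OF b(1)] by (auto simp: down_def)
    qed
  qed
  have satU: "\<forall>c\<in>\<eta>. satisfies U c"
  proof
    fix c assume c: "c \<in> \<eta>"
    have hc: "\<forall>A\<in>set (head c). \<forall>t\<in>set (atom_trms A). trm_consts t \<subseteq> C"
      using c unfolding C_def HCc_def by blast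
    show "satisfies U c" using sat_transfer[OF _ _ UW clos hc dU] satW wfc c by blast
  qed
  have lenW: "\<forall>a\<in>W. fst a \<in> fst ` D \<and> length (snd a) \<in> (\<lambda>b. length (snd b)) ` D"
  proof
    fix a assume "a \<in> W"
    then have "a \<in> It D \<union> Iu D E" using pw by (auto simp: possible_world_def)
    then obtain b where "b \<in> D" "fst a = fst b" "length (snd a) = length (snd b)"
      by (auto simp: It_def Iu_def down_def simS_def compatS_def compat_def prec_def)
    then show "fst a \<in> fst ` D \<and> length (snd a) \<in> (\<lambda>b. length (snd b)) ` D"
      by auto
  qed
  define M where "M = Max ((\<lambda>b. length (snd b)) ` D)"
  have "U \<subseteq> fst ` D \<times> {xs. set xs \<subseteq> C \<and> length xs \<le> M}"
  proof
    fix a assume a: "a \<in> U"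
    then have "length (snd a) \<le> M" using lenW UW finD unfolding M_def by auto
    then show "a \<in> fst ` D \<times> {xs. set xs \<subseteq> C \<and> length xs \<le> M}"
    proof -
      have "a \<in> W" using a UW by auto
      then have "fst a \<in> fst ` D" using lenW by blast
      then show ?thesis using a dU \<open>length (snd a) \<le> M\<close> by (simp add: mem_Times_iff)
    qed
  qed
  moreover have "finite (fst ` D \<times> {xs. set xs \<subseteq> C \<and> length xs \<le> M})"
    using finD finC finite_lists_length_le by blast
  ultimately have finU: "finite U" by (rule finite_subset)
  have "Dom U \<subseteq> C" using dU unfolding Dom_def by auto
  then have "card (Dom U) \<le> card C" using finC by (rule card_mono[rotated])
  also have "\<dots> \<le> card (\<Union>b\<in>D. set (snd (w b))) + card (\<Union>c\<in>\<eta>. HCc c)"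
    unfolding C_def by (rule card_Un_le)
  also have "card (\<Union>b\<in>D. set (snd (w b))) \<le> (\<Sum>b\<in>D. card (set (snd (w b))))"
    by (rule card_UN_le[OF finD])
  also have "\<dots> \<le> (\<Sum>b\<in>D. fact_size b)"
  proof (rule sum_mono)
    fix b assume "b \<in> D"
    then have "length (snd (w b)) = length (snd b)" using w by (auto simp: prec_def)
    then show "card (set (snd (w b))) \<le> fact_size b"
      using card_length[of "snd (w b)"] by (simp add: fact_size_def)
  qed
  also have "card (\<Union>c\<in>\<eta>. HCc c) \<le> (\<Sum>c\<in>\<eta>. card (HCc c))"
    by (rule card_UN_le[OF fin\<eta>])
  also have "\<dots> \<le> ics_size \<eta>" unfolding ics_size_def by (rule sum_mono) (rule HCc_card)
  finally have "card (Dom U) \<le> 1 * (db_size D E + ics_size \<eta>) + 1"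
    by (simp add: db_size_def)
  then show "\<exists>U. possible_world_ic D E \<eta> U \<and> finite U \<and>
                card (Dom U) \<le> 1 * (db_size D E + ics_size \<eta>) + 1"
    using pwU satU finU unfolding possible_world_ic_def by blast
qed

end
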